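(* Each of the following posets has the Möbius uncertainty property: (i) the set $\mathbb{N}$ of positive integers ordered by divisibility; (ii) the set $\mathscr{F}(\mathbb{N})$ of finite subsets of $\mathbb{N}$ ordered by inclusion; (iii) the set $\mathscr{V}(\mathbb{F}_q^\infty)$ of finite-dimensional subspaces of $\mathbb{F}_q^\infty$ ordered by inclusion, for a finite field $\mathbb{F}_q$. Here a locally finite poset $P$ with minimum element has the Möbius uncertainty property if whenever $f,g:P\to\mathbb{C}$ are functions, neither identically zero, with $g(z)=\sum_{x\leqslant z} f(x)$ for all $z\in P$, at least one of $\operatorname{supp}(f)=\{x: f(x)\neq0\}$ and $\operatorname{supp}(g)=\{x: g(x)\neq 0\}$ is infinite.
   Context: $\mathbb{F}_q^\infty$ denotes the countably-infinite-dimensional vector space over $\mathbb{F}_q$ (finitely supported sequences over $\mathbb{F}_q$). All three posets are locally finite with a minimum element ($1$, $\emptyset$, $\{0\}$ respectively). *)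

theory Defs
  imports Complex_Main
begin

text \<open>Local finiteness / minimum element are properties of the concrete posets
  below; the sum over the (finite) down-set is the ordinary finite sum.\<close>

definition mobius_uncertainty :: "'a set \<Rightarrow> ('a \<Rightarrow> 'a \<Rightarrow> bool) \<Rightarrow> bool" where
  "mobius_uncertainty P le \<longleftrightarrow>
     (\<forall>f g :: 'a \<Rightarrow> complex.
        (\<exists>x\<in>P. f x \<noteq> 0) \<and> (\<exists>x\<in>P. g x \<noteq> 0) \<and>
        (\<forall>z\<in>P. g z = (\<Sum>x\<in>{x\<in>P. le x z}. f x))
        \<longrightarrow> infinite {x\<in>P. f x \<noteq> 0} \<or> infinite {x\<in>P. g x \<noteq> 0})"

text \<open>F_q^\<infinity>: finitely supported sequences over the field 'a.\<close>
definition finsupp_seqs :: "(nat \<Rightarrow> 'a::zero) set" where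
  "finsupp_seqs = {v. finite {i. v i \<noteq> 0}}"

definition seq_span :: "(nat \<Rightarrow> 'a::field) set \<Rightarrow> (nat \<Rightarrow> 'a) set" where
  "seq_span S = {x. \<exists>c. x = (\<lambda>i. \<Sum>v\<in>S. c v * v i)}"

definition fd_subspaces :: "(nat \<Rightarrow> 'a::field) set set" where
  "fd_subspaces = {V. \<exists>S. finite S \<and> S \<subseteq> finsupp_seqs \<and> V = seq_span S}"

end

theory Submission
  imports Defs "HOL-Library.FuncSet"
begin

lemma mu_escape:
  assumes H: "\<And>F. F \<subseteq> P \<Longrightarrow> finite F \<Longrightarrow> F \<noteq> {} \<Longrightarrow>
     (\<exists>m\<in>F. infinite {z\<in>P. finite {x\<in>P. le x z} \<and> {x\<in>F. le x z} = {m}})"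
  shows "mobius_uncertainty P le"
  unfolding mobius_uncertainty_def
proof (intro allI impI)
  fix f g :: "'a \<Rightarrow> complex"
  assume A: "(\<exists>x\<in>P. f x \<noteq> 0) \<and> (\<exists>x\<in>P. g x \<noteq> 0) \<and>
        (\<forall>z\<in>P. g z = (\<Sum>x\<in>{x\<in>P. le x z}. f x))"
  show "infinite {x\<in>P. f x \<noteq> 0} \<or> infinite {x\<in>P. g x \<noteq> 0}"
  proof (cases "infinite {x\<in>P. f x \<noteq> 0}")
    case True then show ?thesis by simp
  next
    case False
    then have fin: "finite {x\<in>P. f x \<noteq> 0}" by simp
    have ne: "{x\<in>P. f x \<noteq> 0} \<noteq> {}" using A by blast
    obtain m where m: "m \<in> {x\<in>P. f x \<noteq> 0}"
      and inf: "infinite {z\<in>P. finite {x\<in>P. le x z} \<and> {x\<in>{x\<in>P. f x \<noteq> 0}. le x z} = {m}}"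
      using H[OF _ fin ne] by blast
    have "{z\<in>P. finite {x\<in>P. le x z} \<and> {x\<in>{x\<in>P. f x \<noteq> 0}. le x z} = {m}} \<subseteq> {x\<in>P. g x \<noteq> 0}"
    proof
      fix z assume z: "z \<in> {z\<in>P. finite {x\<in>P. le x z} \<and> {x\<in>{x\<in>P. f x \<noteq> 0}. le x z} = {m}}"
      then have zP: "z \<in> P" and fd: "finite {x\<in>P. le x z}"
        and eq: "{x\<in>{x\<in>P. f x \<noteq> 0}. le x z} = {m}" by auto
      have "g z = (\<Sum>x\<in>{x\<in>P. le x z}. f x)" using A zP by blast
      also have "\<dots> = (\<Sum>x\<in>{m}. f x)"
        apply (rule sum.mono_neutral_right[OF fd])
        using eq by auto
      finally have "g z = f m" by simp
      then show "z \<in> {x\<in>P. g x \<noteq> 0}" using m zP by simp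
    qed
    then show ?thesis using inf infinite_super by blast
  qed
qed

lemma inj_infinite_range: "inj (h :: nat \<Rightarrow> 'b) \<Longrightarrow> infinite (range h)"
  using finite_imageD infinite_UNIV_nat by blast

lemma part1: "mobius_uncertainty {n::nat. n > 0} (dvd)"
proof (rule mu_escape)
  fix F assume FP: "F \<subseteq> {n::nat. n > 0}" and fin: "finite F" and ne: "F \<noteq> {}"
  define m where "m = Min F"
  have mF: "m \<in> F" using fin ne m_def by simp
  have mpos: "m > 0" using mF FP by auto
  define M where "M = \<Prod>F"
  have Mpos: "M > 0" unfolding M_def using FP fin by (auto intro: prod_pos)
  define h where "h k = m * (k * M + 1)" for k
  have inj: "inj h" unfolding inj_def h_def using mpos Mpos by auto
  have "range h \<subseteq> {z\<in>{n::nat. n > 0}. finite {x\<in>{n::nat. n > 0}. x dvd z} \<and> {x\<in>F. x dvd z} = {m}}"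
  proof clarify
    fix k
    have hp: "h k > 0" using mpos h_def by simp
    have "finite {x\<in>{n::nat. n > 0}. x dvd h k}"
      by (rule finite_subset[of _ "{..h k}"]) (auto intro: dvd_imp_le hp)
    moreover have "{x\<in>F. x dvd h k} = {m}"
    proof
      show "{m} \<subseteq> {x\<in>F. x dvd h k}" using mF h_def by auto
      show "{x\<in>F. x dvd h k} \<subseteq> {m}"
      proof clarify
        fix x assume xF: "x \<in> F" and xd: "x dvd h k"
        have "x dvd M" unfolding M_def using xF fin by auto
        then have "coprime x (k * M + 1)"
          by (meson coprime_add_one_right coprime_divisors dvd_mult dvd_refl)
        then have "x dvd m" using xd h_def by (metis coprime_dvd_mult_left_iff)
        then have "x \<le> m" using mpos by (simp add: dvd_imp_le)
        moreover have "m \<le> x" using m_def fin xF by simp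
        ultimately show "x = m" by simp
      qed
    qed
    ultimately show "h k \<in> {n. 0 < n} \<and> finite {x \<in> {n. 0 < n}. x dvd h k} \<and> {x \<in> F. x dvd h k} = {m}"
      using hp by simp
  qed
  then show "\<exists>m\<in>F. infinite {z\<in>{n::nat. n > 0}. finite {x\<in>{n::nat. n > 0}. x dvd z} \<and> {x\<in>F. x dvd z} = {m}}"
    using mF inj_infinite_range[OF inj] infinite_super by blast
qed


lemma part2: "mobius_uncertainty {A :: nat set. finite A \<and> A \<subseteq> {0<..}} (\<subseteq>)"
proof (rule mu_escape)
  fix F assume FP: "F \<subseteq> {A :: nat set. finite A \<and> A \<subseteq> {0<..}}" and fin: "finite F" and ne: "F \<noteq> {}"
  obtain m where mF: "m \<in> F" and mmin: "\<And>b. b \<in> F \<Longrightarrow> b \<subseteq> m \<Longrightarrow> m = b"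
    using finite_has_minimal[OF fin ne] by blast
  have "\<forall>A\<in>F. finite A" using FP by (auto simp: subset_iff)
  then have "finite (\<Union>F)" using fin by (simp add: finite_Union)
  then obtain B where B0: "\<forall>x\<in>\<Union>F. x < B" unfolding finite_nat_set_iff_bounded by blast
  have B: "\<And>x. x \<in> \<Union>F \<Longrightarrow> x < B" using B0 by blast
  define h where "h k = insert (B + k + 1) m" for k
  have nx: "B + k + 1 \<notin> x" if "x \<in> F" for k x
  proof
    assume "B + k + 1 \<in> x"
    then have "B + k + 1 \<in> \<Union>F" using that by blast
    then show False using B[of "B + k + 1"] by simp
  qed
  have nm: "B + k + 1 \<notin> m" for k using nx[OF mF] .
  have inj: "inj h"
  proof (rule injI)
    fix a b assume "h a = h b"
    then have "B + a + 1 \<in> h b" unfolding h_def by auto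
    then show "a = b" using nm[of a] unfolding h_def by auto
  qed
  have "range h \<subseteq> {z\<in>{A :: nat set. finite A \<and> A \<subseteq> {0<..}}. finite {x\<in>{A :: nat set. finite A \<and> A \<subseteq> {0<..}}. x \<subseteq> z} \<and> {x\<in>F. x \<subseteq> z} = {m}}"
  proof clarify
    fix k
    have "finite m \<and> m \<subseteq> {0<..}" using mF FP by blast
    then have hP: "h k \<in> {A :: nat set. finite A \<and> A \<subseteq> {0<..}}" unfolding h_def by auto
    have "finite {x\<in>{A :: nat set. finite A \<and> A \<subseteq> {0<..}}. x \<subseteq> h k}"
      by (rule finite_subset[of _ "Pow (h k)"]) (use hP in \<open>auto simp: h_def\<close>)
    moreover have "{x\<in>F. x \<subseteq> h k} = {m}"
    proof
      show "{m} \<subseteq> {x\<in>F. x \<subseteq> h k}" using mF h_def by auto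
      show "{x\<in>F. x \<subseteq> h k} \<subseteq> {m}"
      proof clarify
        fix x assume xF: "x \<in> F" and xd: "x \<subseteq> h k"
        have "B + k + 1 \<notin> x" using nx[OF xF] .
        then have "x \<subseteq> m" using xd h_def by auto
        then show "x = m" using mmin xF by auto
      qed
    qed
    ultimately show "h k \<in> {A :: nat set. finite A \<and> A \<subseteq> {0<..}} \<and> finite {x\<in>{A :: nat set. finite A \<and> A \<subseteq> {0<..}}. x \<subseteq> h k} \<and> {x \<in> F. x \<subseteq> h k} = {m}"
      using hP by simp
  qed
  then show "\<exists>m\<in>F. infinite {z\<in>{A :: nat set. finite A \<and> A \<subseteq> {0<..}}. finite {x\<in>{A :: nat set. finite A \<and> A \<subseteq> {0<..}}. x \<subseteq> z} \<and> {x\<in>F. x \<subseteq> z} = {m}}"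
    using mF inj_infinite_range[OF inj] infinite_super by blast
qed

definition unitv :: "nat \<Rightarrow> nat \<Rightarrow> 'a::field" where
  "unitv n = (\<lambda>i. if i = n then 1 else 0)"

lemma unitv_finsupp: "unitv n \<in> finsupp_seqs"
proof -
  have "{i. unitv n i \<noteq> (0::'a)} = {n}" by (auto simp: unitv_def)
  then show ?thesis unfolding finsupp_seqs_def by simp
qed

lemma span_bounded:
  assumes "finite S" "S \<subseteq> finsupp_seqs"
  shows "\<exists>B. \<forall>v\<in>seq_span (S :: (nat \<Rightarrow> 'a::field) set). \<forall>i\<ge>B. v i = 0"
proof -
  have "finite (\<Union>v\<in>S. {i. v i \<noteq> 0})"
    using assms unfolding finsupp_seqs_def by auto
  then obtain B where B: "\<forall>x\<in>(\<Union>v\<in>S. {i. v i \<noteq> 0}). x < B"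
    unfolding finite_nat_set_iff_bounded by blast
  have "\<forall>v\<in>seq_span S. \<forall>i\<ge>B. v i = 0"
  proof (intro ballI allI impI)
    fix v i assume "v \<in> seq_span S" "B \<le> i"
    then obtain c where c: "v = (\<lambda>i. \<Sum>w\<in>S. c w * w i)" unfolding seq_span_def by blast
    have "\<forall>w\<in>S. w i = 0" using B \<open>B \<le> i\<close> by fastforce
    then show "v i = 0" unfolding c by (auto intro!: sum.neutral)
  qed
  then show ?thesis by blast
qed

lemma fd_bounded:
  assumes "X \<in> fd_subspaces"
  shows "\<exists>B. \<forall>v\<in>(X :: (nat \<Rightarrow> 'a::field) set). \<forall>i\<ge>B. v i = 0"
  using assms span_bounded unfolding fd_subspaces_def by blast

lemma family_bounded:
  assumes "finite F" "F \<subseteq> (fd_subspaces :: (nat \<Rightarrow> 'a::field) set set)"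
  shows "\<exists>N. \<forall>X\<in>F. \<forall>v\<in>X. \<forall>i\<ge>N. v i = 0"
  using assms
proof (induction F rule: finite_induct)
  case empty then show ?case by simp
next
  case (insert X F)
  then obtain N where N: "\<forall>X\<in>F. \<forall>v\<in>X. \<forall>i\<ge>N. v i = 0" by auto
  obtain B where B: "\<forall>v\<in>X. \<forall>i\<ge>B. v i = 0" using fd_bounded insert.prems by blast
  have "\<forall>Y\<in>insert X F. \<forall>v\<in>Y. \<forall>i\<ge>max N B. v i = 0" using N B by auto
  then show ?case by blast
qed

lemma span_finite:
  assumes "finite T"
  shows "finite (seq_span (T :: (nat \<Rightarrow> 'a::{field,finite}) set))"
proof -
  have "seq_span T \<subseteq> (\<lambda>c. \<lambda>i. \<Sum>v\<in>T. c v * v i) ` (T \<rightarrow>\<^sub>E (UNIV :: 'a set))"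
  proof
    fix x assume "x \<in> seq_span T"
    then obtain c where c: "x = (\<lambda>i. \<Sum>v\<in>T. c v * v i)" unfolding seq_span_def by blast
    have "x = (\<lambda>i. \<Sum>v\<in>T. restrict c T v * v i)" unfolding c by (auto intro: sum.cong)
    moreover have "restrict c T \<in> T \<rightarrow>\<^sub>E (UNIV :: 'a set)" by simp
    ultimately show "x \<in> (\<lambda>c. \<lambda>i. \<Sum>v\<in>T. c v * v i) ` (T \<rightarrow>\<^sub>E (UNIV :: 'a set))" by blast
  qed
  moreover have "finite (T \<rightarrow>\<^sub>E (UNIV :: 'a set))" using assms by (simp add: finite_PiE)
  ultimately show ?thesis using finite_subset by blast
qed

lemma in_span:
  assumes "finite S" "v \<in> S"
  shows "v \<in> seq_span (S :: (nat \<Rightarrow> 'a::field) set)"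
proof -
  have "v = (\<lambda>i. \<Sum>w\<in>S. (if w = v then 1 else 0) * w i)"
  proof (rule ext)
    fix i
    have "(\<Sum>w\<in>S. (if w = v then 1 else 0) * w i) = (\<Sum>w\<in>S. if v = w then w i else 0)"
      by (rule sum.cong) auto
    also have "\<dots> = v i" using assms by simp
    finally show "v i = (\<Sum>w\<in>S. (if w = v then 1 else 0) * w i)" by simp
  qed
  then show ?thesis unfolding seq_span_def
    by (intro CollectI) (rule exI[of _ "\<lambda>w. if w = v then (1::'a) else 0"])
qed

lemma span_insert_sub:
  assumes "finite S" "e \<notin> S" "x \<in> seq_span (insert e S)"
  shows "\<exists>w a. w \<in> seq_span (S :: (nat \<Rightarrow> 'a::field) set) \<and> x = (\<lambda>i. w i + a * e i)"
proof -
  obtain c where c: "x = (\<lambda>i. \<Sum>v\<in>insert e S. c v * v i)" using assms(3) unfolding seq_span_def by blast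
  have "x = (\<lambda>i. (\<Sum>v\<in>S. c v * v i) + c e * e i)" unfolding c using assms by (simp add: add.commute)
  moreover have "(\<lambda>i. \<Sum>v\<in>S. c v * v i) \<in> seq_span S" unfolding seq_span_def by blast
  ultimately show ?thesis by blast
qed

lemma span_mono_insert:
  assumes "finite S" "e \<notin> S"
  shows "seq_span (S :: (nat \<Rightarrow> 'a::field) set) \<subseteq> seq_span (insert e S)"
proof
  fix x assume "x \<in> seq_span S"
  then obtain c where c: "x = (\<lambda>i. \<Sum>v\<in>S. c v * v i)" unfolding seq_span_def by blast
  have "(\<Sum>v\<in>S. (c(e:=0)) v * v i) = (\<Sum>v\<in>S. c v * v i)" for i
    using assms by (intro sum.cong) auto
  then have "x = (\<lambda>i. \<Sum>v\<in>insert e S. (c(e:=0)) v * v i)" unfolding c using assms by simp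
  then show "x \<in> seq_span (insert e S)" unfolding seq_span_def by blast
qed

lemma part3: "mobius_uncertainty (fd_subspaces :: (nat \<Rightarrow> 'a::{field,finite}) set set) (\<subseteq>)"
proof (rule mu_escape)
  fix F :: "(nat \<Rightarrow> 'a) set set"
  assume FP: "F \<subseteq> fd_subspaces" and fin: "finite F" and ne: "F \<noteq> {}"
  obtain m where mF: "m \<in> F" and mmin: "\<And>b. b \<in> F \<Longrightarrow> b \<subseteq> m \<Longrightarrow> m = b"
    using finite_has_minimal[OF fin ne] by blast
  obtain N where N: "\<forall>X\<in>F. \<forall>v\<in>X. \<forall>i\<ge>N. v i = 0" using family_bounded[OF fin FP] by blast
  have "m \<in> fd_subspaces" using mF FP by blast
  then obtain S where S: "finite S" "S \<subseteq> finsupp_seqs" "m = seq_span S" unfolding fd_subspaces_def by blast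
  have mN: "\<And>v i. v \<in> m \<Longrightarrow> N \<le> i \<Longrightarrow> v i = 0" using N mF by blast
  have eS: "unitv (N + k) \<notin> S" for k
  proof
    assume "unitv (N + k) \<in> S"
    then have "unitv (N + k) \<in> m" using in_span S by blast
    then have "unitv (N + k) (N + k) = (0::'a)" using mN by simp
    then show False by (simp add: unitv_def)
  qed
  define h where "h k = seq_span (insert (unitv (N + k)) S)" for k
  have inj: "inj h"
  proof (rule injI)
    fix a b assume hab: "h a = h b"
    show "a = b"
    proof (rule ccontr)
      assume "a \<noteq> b"
      have "unitv (N + a) \<in> h a" unfolding h_def using S by (intro in_span) auto
      then have "unitv (N + a) \<in> seq_span (insert (unitv (N + b)) S)" using hab h_def by simp
      then obtain w c where w: "w \<in> m" and eq: "unitv (N + a) = (\<lambda>i. w i + c * unitv (N + b) i)"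
        using span_insert_sub[OF S(1) eS] S(3) by blast
      have "unitv (N + a) (N + a) = w (N + a) + c * unitv (N + b) (N + a)" using eq by meson
      moreover have "w (N + a) = 0" using mN w by simp
      ultimately show False using \<open>a \<noteq> b\<close> by (simp add: unitv_def)
    qed
  qed
  have "range h \<subseteq> {z\<in>fd_subspaces. finite {x\<in>fd_subspaces. x \<subseteq> z} \<and> {x\<in>F. x \<subseteq> z} = {m}}"
  proof clarify
    fix k
    have hP: "h k \<in> fd_subspaces" unfolding h_def fd_subspaces_def using S unitv_finsupp by blast
    have "finite (h k)" unfolding h_def using S by (intro span_finite) simp
    then have "finite {x\<in>fd_subspaces. x \<subseteq> h k}"
      by (rule finite_subset[rotated, OF finite_Pow_iff[THEN iffD2]]) blast
    moreover have "{x\<in>F. x \<subseteq> h k} = {m}"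
    proof
      have "m \<subseteq> h k" unfolding h_def S(3) using span_mono_insert[OF S(1) eS] .
      then show "{m} \<subseteq> {x\<in>F. x \<subseteq> h k}" using mF by blast
      show "{x\<in>F. x \<subseteq> h k} \<subseteq> {m}"
      proof clarify
        fix x assume xF: "x \<in> F" and xd: "x \<subseteq> h k"
        have "x \<subseteq> m"
        proof
          fix v assume vx: "v \<in> x"
          then have "v \<in> seq_span (insert (unitv (N + k)) S)" using xd h_def by blast
          then obtain w c where w: "w \<in> m" and eq: "v = (\<lambda>i. w i + c * unitv (N + k) i)"
            using span_insert_sub[OF S(1) eS] S(3) by blast
          have "v (N + k) = w (N + k) + c * unitv (N + k) (N + k)" using eq by meson
          moreover have "w (N + k) = 0" using mN w by simp
          moreover have "v (N + k) = 0" using N xF vx by simp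
          ultimately have "c = 0" by (simp add: unitv_def)
          then have "v = w" using eq by simp
          then show "v \<in> m" using w by simp
        qed
        then show "x = m" using mmin xF by auto
      qed
    qed
    ultimately show "h k \<in> fd_subspaces \<and> finite {x\<in>fd_subspaces. x \<subseteq> h k} \<and> {x \<in> F. x \<subseteq> h k} = {m}"
      using hP by simp
  qed
  then show "\<exists>m\<in>F. infinite {z\<in>fd_subspaces. finite {x\<in>fd_subspaces. x \<subseteq> z} \<and> {x\<in>F. x \<subseteq> z} = {m}}"
    using mF inj_infinite_range[OF inj] infinite_super by blast
qed


theorem corollary1p3:
  shows "mobius_uncertainty {n::nat. n > 0} (dvd) \<and>
         mobius_uncertainty {A :: nat set. finite A \<and> A \<subseteq> {0<..}} (\<subseteq>) \<and>
         mobius_uncertainty (fd_subspaces :: (nat \<Rightarrow> 'a::{field,finite}) set set) (\<subseteq>)"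
  using part1 part2 part3 by blast

end
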